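(* Let $\nu>-1$ be real and let $0<j_1<j_2<\cdots$ be the positive zeros of $J_\nu(\cdot;q^2)$. Then for all $n,m\ge1$, $$\int_0^1 x\,J_\nu(qj_nx;q^2)J_\nu(qj_mx;q^2)\,d_qx=-\tfrac12(1-q)q^{\nu-1}J_{\nu+1}(qj_n;q^2)J_\nu'(j_n;q^2)\,\delta_{n,m},$$ and moreover $$-\tfrac12(1-q)q^{\nu-1}J_{\nu+1}(qj_n;q^2)J_\nu'(j_n;q^2)=\tfrac12(1-q)^2q^{\nu-2}\big(D_qJ_\nu(\cdot;q^2)\big)(j_n)\,J_\nu'(j_n;q^2)=-\tfrac12(1-q)q^{\nu-2}j_n^{-1}J_\nu(qj_n;q^2)J_\nu'(j_n;q^2)=-\tfrac12(1-q)q^{-2}J_{\nu+1}(j_n;q^2)J_\nu'(j_n;q^2).$$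
   Context: Fix $0<q<1$. For $a\in\mathbb C$ put $(a;q)_0=1$, $(a;q)_k=\prod_{i=0}^{k-1}(1-aq^i)$, $(a;q)_\infty=\prod_{i\ge0}(1-aq^i)$. For $\nu\in\mathbb C$ and $x\in\mathbb C\setminus\{0\}$ the Hahn–Exton $q$-Bessel function is $$J_\nu(x;q^2)=\frac{x^\nu}{(q^2;q^2)_\infty}\sum_{k=0}^\infty\frac{(-1)^kq^{k(k+1)}(q^{2\nu+2k+2};q^2)_\infty}{(q^2;q^2)_k}\,x^{2k},$$ with $x^\nu=\exp(\nu\operatorname{Log}x)$ (principal branch). $J_\nu'$ is the ordinary derivative in $x$. The $q$-derivative is $(D_qf)(x)=\frac{f(x)-f(qx)}{(1-q)x}$ for $x\ne0$, and the $q$-integral is $\int_0^z f(x)\,d_qx=(1-q)z\sum_{k\ge0}f(zq^k)q^k$. $\delta_{n,m}$ is the Kronecker delta. *)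

theory Defs
  imports "HOL-Analysis.Analysis"
begin

definition qpoch :: "complex \<Rightarrow> complex \<Rightarrow> nat \<Rightarrow> complex" where
  "qpoch a p k = (\<Prod>i<k. 1 - a * p ^ i)"

definition qpoch_inf :: "complex \<Rightarrow> complex \<Rightarrow> complex" where
  "qpoch_inf a p = (\<Prod>i. 1 - a * p ^ i)"

text \<open>Hahn--Exton q-Bessel function J_nu(x;q^2), with x^nu via the principal branch
  (complex powr uses the principal logarithm).\<close>
definition hej :: "real \<Rightarrow> real \<Rightarrow> complex \<Rightarrow> complex" where
  "hej q \<nu> x = x powr (complex_of_real \<nu>) / qpoch_inf (of_real (q^2)) (of_real (q^2)) *
     (\<Sum>k. (-1)^k * of_real (q ^ (k*(k+1)))
            * qpoch_inf (of_real (q powr (2*\<nu> + 2*real k + 2))) (of_real (q^2))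
            / qpoch (of_real (q^2)) (of_real (q^2)) k * x ^ (2*k))"

definition qder :: "real \<Rightarrow> (complex \<Rightarrow> complex) \<Rightarrow> complex \<Rightarrow> complex" where
  "qder q f x = (f x - f (of_real q * x)) / ((1 - of_real q) * x)"

definition qint :: "real \<Rightarrow> (complex \<Rightarrow> complex) \<Rightarrow> complex \<Rightarrow> complex" where
  "qint q f z = (1 - of_real q) * z * (\<Sum>k. f (z * of_real q ^ k) * of_real q ^ k)"

end

theory Submission
  imports Defs
begin


definition tc :: "real \<Rightarrow> real \<Rightarrow> nat \<Rightarrow> complex" where
  "tc q \<nu> k = (-1)^k * of_real (q ^ (k*(k+1)))
       * qpoch_inf (of_real (q powr (2*\<nu> + 2*real k + 2))) (of_real (q^2))
       / qpoch (of_real (q^2)) (of_real (q^2)) k"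

definition GG :: "real \<Rightarrow> real \<Rightarrow> complex \<Rightarrow> complex" where
  "GG q \<nu> y = (\<Sum>k. tc q \<nu> k * y ^ k)"

lemma qpoch_inf_conv:
  assumes "0 < r" "r < 1"
  shows "convergent_prod (\<lambda>i. 1 - b * complex_of_real r ^ i)"
proof -
  have "summable (\<lambda>i. norm b * r ^ i)"
    using assms by (intro summable_mult summable_geometric) auto
  moreover have "norm ((1 - b * complex_of_real r ^ i) - 1) = norm b * r ^ i" for i
    using assms by (simp add: norm_mult norm_power)
  ultimately have "summable (\<lambda>i. norm ((1 - b * complex_of_real r ^ i) - 1))" by simp
  hence "abs_convergent_prod (\<lambda>i. 1 - b * complex_of_real r ^ i)"
    by (rule summable_imp_abs_convergent_prod)
  thus ?thesis by (rule abs_convergent_prod_imp_convergent_prod)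
qed

lemma qpoch_inf_shift:
  assumes "0 < r" "r < 1" "b \<noteq> 1"
  shows "qpoch_inf b (of_real r) = (1 - b) * qpoch_inf (b * of_real r) (of_real r)"
proof -
  have "(\<Prod>n. (\<lambda>i. 1 - b * complex_of_real r ^ i) (Suc n)) = qpoch_inf b (of_real r) / (1 - b)"
    using prodinf_split_head[OF qpoch_inf_conv[OF assms(1,2), of b]] assms(3)
    by (simp add: qpoch_inf_def)
  moreover have "(\<Prod>n. (\<lambda>i. 1 - b * complex_of_real r ^ i) (Suc n)) = qpoch_inf (b * of_real r) (of_real r)"
    unfolding qpoch_inf_def by (simp add: mult.assoc)
  ultimately show ?thesis using assms(3) by (simp add: field_simps)
qed

lemma qpoch_inf_nz:
  assumes "0 < r" "r < 1" "norm b < 1"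
  shows "qpoch_inf b (of_real r) \<noteq> 0"
  unfolding qpoch_inf_def
proof (rule prodinf_nonzero[OF qpoch_inf_conv[OF assms(1,2)]])
  fix i
  have "norm (b * complex_of_real r ^ i) \<le> norm b"
    using assms by (simp add: norm_mult norm_power mult_left_le power_le_one)
  hence "norm (b * complex_of_real r ^ i) < 1" using assms by linarith
  thus "1 - b * complex_of_real r ^ i \<noteq> 0"
    by (metis norm_one order_less_irrefl right_minus_eq)
qed

lemma qpoch_Suc: "qpoch a p (Suc k) = qpoch a p k * (1 - a * p ^ k)"
  by (simp add: qpoch_def)

lemma qpoch_nz:
  assumes "0 < r" "r < 1"
  shows "qpoch (of_real r) (of_real r) k \<noteq> 0"
proof -
  have "r * r ^ i < 1" for i
    using assms by (metis mult_less_le_imp_less mult_1_right less_eq_real_def power_le_one zero_less_power zero_less_one not_less)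
  hence "complex_of_real r * complex_of_real r ^ i \<noteq> 1" for i
    by (metis of_real_mult of_real_power of_real_eq_1_iff order_less_irrefl)
  thus ?thesis unfolding qpoch_def by (auto simp: prod_zero_iff)
qed

lemma powr_lt1: "0 < q \<Longrightarrow> q < (1::real) \<Longrightarrow> e > 0 \<Longrightarrow> q powr e < 1"
  by (metis powr_less_mono2 powr_one_eq_one less_eq_real_def)

lemma tc_A:
  assumes q: "0 < q" "q < 1" and nu: "\<nu> > -1"
  shows "tc q \<nu> k = tc q (\<nu>+1) k * (1 - of_real (q powr (2*\<nu>+2)) * of_real (q^2)^k)"
proof -
  have q2: "0 < q^2" "q^2 < 1" using q by (auto simp: power_less_one_iff)
  have pk: "(q^2)^k = q powr (2*real k)"
    using powr_realpow[OF q(1), of "2*k"] by (simp add: power_mult)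
  have e: "q powr (2*\<nu> + 2*real k + 2) = q powr (2*\<nu>+2) * (q^2)^k"
    unfolding pk by (simp add: powr_add[symmetric] algebra_simps)
  have p2: "q^2 = q powr 2"
    using powr_realpow[OF q(1), of 2] by simp
  have e2: "q powr (2*\<nu> + 2*real k + 2) * q^2 = q powr (2*(\<nu>+1) + 2*real k + 2)"
    unfolding p2 by (simp add: powr_add[symmetric] algebra_simps)
  have lt: "q powr (2*\<nu> + 2*real k + 2) < 1" using q nu by (intro powr_lt1) auto
  have X: "qpoch_inf (of_real (q powr (2*\<nu> + 2*real k + 2))) (of_real (q^2)) =
     (1 - of_real (q powr (2*\<nu> + 2*real k + 2))) *
     qpoch_inf (of_real (q powr (2*\<nu> + 2*real k + 2)) * of_real (q^2)) (of_real (q^2))"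
    using qpoch_inf_shift[OF q2, of "of_real (q powr (2*\<nu> + 2*real k + 2))"] lt by auto
  have Z: "complex_of_real (q powr (2*\<nu> + 2*real k + 2)) * of_real (q^2) =
      of_real (q powr (2*(\<nu>+1) + 2*real k + 2))"
    by (simp only: of_real_mult[symmetric] e2)
  have Y: "qpoch_inf (of_real (q powr (2*\<nu> + 2*real k + 2))) (of_real (q^2)) =
     (1 - of_real (q powr (2*\<nu> + 2*real k + 2))) *
     qpoch_inf (of_real (q powr (2*(\<nu>+1) + 2*real k + 2))) (of_real (q^2))"
    using X unfolding Z .
  have e3: "complex_of_real (q powr (2*\<nu> + 2*real k + 2)) = of_real (q powr (2*\<nu>+2)) * of_real (q^2)^k"
    by (simp only: e of_real_mult of_real_power)
  show ?thesis
    apply (unfold tc_def)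
    apply (subst Y)
    apply (unfold e3)
    by (simp add: algebra_simps)
qed

lemma tc_B:
  assumes q: "0 < q" "q < 1"
  shows "tc q \<nu> (Suc l) * (1 - of_real (q^2)^(Suc l))
       = - of_real (q^2) * of_real (q^2)^l * tc q (\<nu>+1) l"
proof -
  have q2: "0 < q^2" "q^2 < 1" using q by (auto simp: power_less_one_iff)
  have e: "2*\<nu> + 2*real (Suc l) + 2 = 2*(\<nu>+1) + 2*real l + 2" by simp
  have qp: "qpoch (of_real (q^2)) (of_real (q^2)) (Suc l) =
     qpoch (of_real (q^2)) (of_real (q^2)) l * (1 - of_real (q^2)^(Suc l))"
    by (simp add: qpoch_Suc)
  have nz: "qpoch (of_real (q^2)) (of_real (q^2)) l \<noteq> 0" using qpoch_nz[OF q2] by blast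
  have nz2: "1 - complex_of_real (q^2)^(Suc l) \<noteq> 0"
  proof
    assume "1 - complex_of_real (q^2)^(Suc l) = 0"
    hence "(q^2)^(Suc l) = 1" by (metis of_real_eq_1_iff of_real_power right_minus_eq)
    moreover have "(q^2)^(Suc l) < 1" using q2 by (intro power_Suc_less_one) auto
    ultimately show False by simp
  qed
  have pw: "q ^ (Suc l * (Suc l + 1)) = q^2 * (q^2)^l * q ^ (l*(l+1))"
  proof -
    have "Suc l * (Suc l + 1) = 2 + 2*l + l*(l+1)" by (simp add: algebra_simps)
    thus ?thesis by (simp only: power_add power_mult)
  qed
  show ?thesis unfolding tc_def e qp pw using nz nz2
    by (simp add: field_simps)
qed



lemma tc_ratio:
  assumes q: "0 < q" "q < 1" and nu: "\<nu> > -1"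
  shows "norm (tc q \<nu> (Suc k)) \<le> (q^2)^(Suc k) / ((1-q^2)*(1 - q powr (2*\<nu>+2))) * norm (tc q \<nu> k)"
proof -
  define r where "r = q^2"
  define b where "b = q powr (2*\<nu>+2)"
  have r: "0 < r" "r < 1" using q by (auto simp: r_def power_less_one_iff)
  have b: "0 < b" "b < 1" using q nu by (auto simp: b_def intro!: powr_lt1)
  have rk: "r^Suc k \<le> r" "r^k \<le> 1" using r by (auto intro: power_le_one power_decreasing[of 1 "Suc k", simplified])
  have bk: "b * r^k \<le> b" using b rk by (simp add: mult_left_le)
  have B: "tc q \<nu> (Suc k) * (1 - of_real r^(Suc k)) = - of_real r * of_real r^k * tc q (\<nu>+1) k"
    using tc_B[OF q, of \<nu> k] by (simp add: r_def)
  have A: "tc q \<nu> k = tc q (\<nu>+1) k * (1 - of_real b * of_real r^k)"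
    using tc_A[OF q nu, of k] by (simp add: r_def b_def)
  have n1: "norm (1 - complex_of_real r^(Suc k)) = 1 - r^Suc k"
  proof -
    have "1 - complex_of_real r^(Suc k) = of_real (1 - r^Suc k)" by simp
    moreover have "1 - r^Suc k \<ge> 0" using power_le_one[of r "Suc k"] r by linarith
    ultimately show ?thesis by (metis abs_of_nonneg norm_of_real)
  qed
  have n2: "norm (1 - complex_of_real b * of_real r^k) = 1 - b * r^k"
  proof -
    have "1 - complex_of_real b * of_real r^k = of_real (1 - b * r^k)" by simp
    moreover have "1 - b * r^k \<ge> 0" using bk b by linarith
    ultimately show ?thesis by (metis abs_of_nonneg norm_of_real)
  qed
  have e1: "norm (tc q \<nu> (Suc k)) * (1 - r^Suc k) = r^Suc k * norm (tc q (\<nu>+1) k)"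
    using arg_cong[OF B, of norm] r unfolding norm_mult n1 by (simp add: norm_power)
  have e2: "norm (tc q \<nu> k) = norm (tc q (\<nu>+1) k) * (1 - b * r^k)"
    using arg_cong[OF A, of norm] unfolding norm_mult n2 .
  have i1: "norm (tc q \<nu> (Suc k)) * (1 - r) \<le> r^Suc k * norm (tc q (\<nu>+1) k)"
    using e1 rk by (metis diff_left_mono mult_left_mono norm_ge_zero order_trans_rules(23))
  have i2: "norm (tc q (\<nu>+1) k) * (1 - b) \<le> norm (tc q \<nu> k)"
    using e2 bk by (simp add: mult_left_mono)
  have "norm (tc q \<nu> (Suc k)) * ((1 - r) * (1 - b)) \<le> r^Suc k * norm (tc q (\<nu>+1) k) * (1 - b)"
    using i1 b by (metis mult.assoc mult_right_mono diff_ge_0_iff_ge less_eq_real_def)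
  also have "\<dots> \<le> r^Suc k * norm (tc q \<nu> k)"
    using i2 r by (simp add: mult.assoc mult_left_mono)
  finally have "norm (tc q \<nu> (Suc k)) * ((1 - r) * (1 - b)) \<le> r^Suc k * norm (tc q \<nu> k)" .
  moreover have "(1 - r) * (1 - b) > 0" using r b by simp
  ultimately show ?thesis unfolding r_def[symmetric] b_def[symmetric]
    by (simp add: pos_le_divide_eq field_simps)
qed

lemma tc_summable:
  assumes q: "0 < q" "q < 1" and nu: "\<nu> > -1"
  shows "summable (\<lambda>k. tc q \<nu> k * y^k)"
proof -
  define r where "r = q^2"
  define b where "b = q powr (2*\<nu>+2)"
  have r: "0 < r" "r < 1" using q by (auto simp: r_def power_less_one_iff)
  have b: "0 < b" "b < 1" using q nu by (auto simp: b_def intro!: powr_lt1)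
  define D where "D = (1-r)*(1-b)"
  have D: "D > 0" using r b by (simp add: D_def)
  have "\<exists>N. r^N < D / (2 * (norm y + 1))"
    using r D by (intro real_arch_pow_inv) (auto intro!: divide_pos_pos add_nonneg_pos)
  then obtain N where N: "r^N < D / (2 * (norm y + 1))" by blast
  show ?thesis
  proof (rule summable_ratio_test[of "1/2" N])
    fix n assume n: "N \<le> n"
    have rn: "r^Suc n \<le> r^N" using r n by (intro power_decreasing) auto
    have c: "r^Suc n / D * norm y \<le> 1/2"
    proof -
      have "r^Suc n * norm y \<le> r^N * (norm y + 1)" using rn r
        by (intro mult_mono) auto
      also have "\<dots> \<le> D/2"
      proof -
        have "r^N * (2 * (norm y + 1)) < D" using N by (subst (asm) pos_less_divide_eq) (auto intro: add_nonneg_pos)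
        thus ?thesis by (simp add: algebra_simps)
      qed
      finally show ?thesis using D by (simp add: field_simps)
    qed
    have "norm (tc q \<nu> (Suc n) * y ^ Suc n) = norm (tc q \<nu> (Suc n)) * norm y * norm y ^ n"
      by (simp add: norm_mult norm_power)
    also have "\<dots> \<le> (r^Suc n / D * norm (tc q \<nu> n)) * norm y * norm y ^ n"
      using tc_ratio[OF q nu, of n] unfolding r_def[symmetric] b_def[symmetric] D_def[symmetric]
      by (intro mult_right_mono) auto
    also have "\<dots> = (r^Suc n / D * norm y) * (norm (tc q \<nu> n) * norm y ^ n)" by simp
    also have "\<dots> \<le> 1/2 * (norm (tc q \<nu> n) * norm y ^ n)"
      using c by (intro mult_right_mono) auto
    finally show "norm (tc q \<nu> (Suc n) * y ^ Suc n) \<le> 1/2 * norm (tc q \<nu> n * y ^ n)"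
      by (simp add: norm_mult norm_power)
  qed simp
qed



lemma GG_A:
  assumes q: "0 < q" "q < 1" and nu: "\<nu> > -1"
  shows "GG q \<nu> y = GG q (\<nu>+1) y - of_real (q powr (2*\<nu>+2)) * GG q (\<nu>+1) (of_real (q^2) * y)"
proof -
  have nu1: "\<nu>+1 > -1" using nu by simp
  note s1 = tc_summable[OF q nu1, of y] and s2 = tc_summable[OF q nu1, of "of_real (q^2) * y"]
  have "GG q (\<nu>+1) y - of_real (q powr (2*\<nu>+2)) * GG q (\<nu>+1) (of_real (q^2) * y)
      = (\<Sum>k. tc q (\<nu>+1) k * y^k - of_real (q powr (2*\<nu>+2)) * (tc q (\<nu>+1) k * (of_real (q^2) * y)^k))"
    unfolding GG_def suminf_mult[OF s2, symmetric] by (rule suminf_diff[OF s1 summable_mult[OF s2]])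
  also have "\<dots> = (\<Sum>k. tc q \<nu> k * y^k)"
    by (rule suminf_cong) (simp add: tc_A[OF q nu] algebra_simps power_mult_distrib)
  finally show ?thesis by (simp add: GG_def)
qed

lemma GG_B:
  assumes q: "0 < q" "q < 1" and nu: "\<nu> > -1"
  shows "GG q \<nu> y - GG q \<nu> (of_real (q^2) * y) = - of_real (q^2) * y * GG q (\<nu>+1) (of_real (q^2) * y)"
proof -
  have nu1: "\<nu>+1 > -1" using nu by simp
  define f where "f k = tc q \<nu> k * y^k - tc q \<nu> k * (of_real (q^2) * y)^k" for k
  have "f sums (GG q \<nu> y - GG q \<nu> (of_real (q^2) * y))"
    unfolding f_def GG_def
    by (intro sums_diff summable_sums tc_summable[OF q nu])
  moreover have "(\<lambda>l. f (Suc l)) sums (- of_real (q^2) * y * GG q (\<nu>+1) (of_real (q^2) * y))"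
  proof -
    have "f (Suc l) = (- of_real (q^2) * y) * (tc q (\<nu>+1) l * (of_real (q^2) * y)^l)" for l
    proof -
      have "f (Suc l) = tc q \<nu> (Suc l) * (1 - of_real (q^2)^(Suc l)) * y^Suc l"
        unfolding f_def by (simp add: algebra_simps power_mult_distrib)
      also have "\<dots> = - of_real (q^2) * of_real (q^2)^l * tc q (\<nu>+1) l * y^Suc l"
        by (simp only: tc_B[OF q])
      finally show ?thesis by (simp add: algebra_simps power_mult_distrib)
    qed
    moreover have "(\<lambda>l. (- of_real (q^2) * y) * (tc q (\<nu>+1) l * (of_real (q^2) * y)^l)) sums
        ((- of_real (q^2) * y) * GG q (\<nu>+1) (of_real (q^2) * y))"
      unfolding GG_def by (intro sums_mult summable_sums tc_summable[OF q nu1])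
    ultimately show ?thesis by simp
  qed
  hence "f sums (- of_real (q^2) * y * GG q (\<nu>+1) (of_real (q^2) * y) + f 0)"
    by (simp add: sums_Suc_iff)
  moreover have "f 0 = 0" by (simp add: f_def)
  ultimately show ?thesis using sums_unique2 by fastforce
qed

lemma GG_E:
  assumes q: "0 < q" "q < 1" and nu: "\<nu> > -1"
  defines "Q \<equiv> complex_of_real (q^2)" and "p \<equiv> complex_of_real (q powr \<nu>)^2"
  shows "GG q \<nu> z + p * GG q \<nu> (Q^2 * z) = (1 + p - Q * z) * GG q \<nu> (Q * z)"
proof -
  define y where "y = Q * z"
  define T where "T = GG q (\<nu>+1)"
  have pQ: "p * Q = of_real (q powr (2*\<nu>+2))"
  proof -
    have p2: "q powr (2::real) = q^2" using powr_realpow[OF q(1), of 2] by simp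
    have pn: "(q powr \<nu>)^2 = q powr (2*\<nu>)" using q by (simp add: powr_power)
    have "q powr (2*\<nu>+2) = (q powr \<nu>)^2 * q^2"
      unfolding pn p2[symmetric] by (simp add: powr_add)
    thus ?thesis by (simp add: p_def Q_def)
  qed
  have A: "GG q \<nu> y = T y - p * Q * T (Q * y)"
    using GG_A[OF q nu, of y] pQ unfolding T_def Q_def by simp
  have B1: "GG q \<nu> y - GG q \<nu> (Q * y) = - Q * y * T (Q * y)"
    using GG_B[OF q nu, of y] unfolding T_def Q_def .
  have B2: "GG q \<nu> z - GG q \<nu> y = - y * T y"
    using GG_B[OF q nu, of z] unfolding T_def Q_def y_def by (simp add: algebra_simps)
  have Qy: "Q^2 * z = Q * y" by (simp add: y_def power2_eq_square)
  have "GG q \<nu> z + p * GG q \<nu> (Q * y) = (1 + p - y) * GG q \<nu> y"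
  proof -
    have e1: "GG q \<nu> z = GG q \<nu> y - y * T y" using B2 by (simp add: algebra_simps)
    have e2: "GG q \<nu> (Q * y) = GG q \<nu> y + Q * y * T (Q * y)" using B1 by (simp add: algebra_simps)
    show ?thesis by (simp only: e1 e2 A) (simp add: algebra_simps)
  qed
  thus ?thesis unfolding Qy y_def .
qed

definition GD :: "real \<Rightarrow> real \<Rightarrow> complex \<Rightarrow> complex" where
  "GD q \<nu> y = (\<Sum>k. diffs (tc q \<nu>) k * y ^ k)"

lemma GG_deriv:
  assumes q: "0 < q" "q < 1" and nu: "\<nu> > -1"
  shows "(GG q \<nu> has_field_derivative GD q \<nu> y) (at y)"
proof -
  have "GG q \<nu> = (\<lambda>y. \<Sum>k. tc q \<nu> k * y ^ k)" by (simp add: GG_def fun_eq_iff)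
  thus ?thesis unfolding GD_def
    using termdiffs_strong_converges_everywhere[OF tc_summable[OF q nu]] by simp
qed

lemma GG_cont:
  assumes q: "0 < q" "q < 1" and nu: "\<nu> > -1"
  shows "isCont (GG q \<nu>) y"
  using GG_deriv[OF assms] by (rule DERIV_isCont)

lemma GD_cont:
  assumes q: "0 < q" "q < 1" and nu: "\<nu> > -1"
  shows "isCont (GD q \<nu>) y"
proof -
  have "GD q \<nu> = (\<lambda>y. \<Sum>k. diffs (tc q \<nu>) k * y ^ k)" by (simp add: GD_def fun_eq_iff)
  thus ?thesis
    using isCont_powser_converges_everywhere[OF termdiff_converges_all[OF tc_summable[OF q nu]]]
    by simp
qed

lemma GG_Ed:
  assumes q: "0 < q" "q < 1" and nu: "\<nu> > -1"
  defines "Q \<equiv> complex_of_real (q^2)" and "p \<equiv> complex_of_real (q powr \<nu>)^2"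
  shows "GD q \<nu> z + p * Q^2 * GD q \<nu> (Q^2 * z)
       = - Q * GG q \<nu> (Q * z) + (1 + p - Q * z) * Q * GD q \<nu> (Q * z)"
proof -
  let ?G = "GG q \<nu>" and ?D = "GD q \<nu>"
  have eq: "(\<lambda>z. ?G z + p * ?G (Q^2 * z)) = (\<lambda>z. (1 + p - Q * z) * ?G (Q * z))"
    using GG_E[OF q nu] unfolding Q_def p_def by auto
  have d1: "((\<lambda>z. ?G z + p * ?G (Q^2 * z)) has_field_derivative (?D z + p * (?D (Q^2 * z) * Q^2))) (at z)"
    by (intro DERIV_add DERIV_cmult DERIV_chain2[OF GG_deriv[OF q nu]] GG_deriv[OF q nu]
          DERIV_cmult_Id)
  have d2: "((\<lambda>z. (1 + p - Q * z) * ?G (Q * z)) has_field_derivative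
       ((- Q) * ?G (Q * z) + (1 + p - Q * z) * (?D (Q * z) * Q))) (at z)"
  proof -
    have "((\<lambda>z. 1 + p - Q * z) has_field_derivative (- Q)) (at z)"
      by (auto intro!: derivative_eq_intros)
    from DERIV_mult'[OF this DERIV_chain2[OF GG_deriv[OF q nu] DERIV_cmult_Id]]
    show ?thesis by simp
  qed
  from DERIV_unique[OF d1 d2[folded eq]] show ?thesis by (simp add: algebra_simps)
qed



lemma tele:
  fixes \<alpha> \<gamma> :: "nat \<Rightarrow> complex" and p Q A B E :: complex
  assumes rA: "\<And>k. \<alpha> k + p * \<alpha> (k+2) = (1 + p - A * Q^(k+1)) * \<alpha> (k+1)"
    and rB: "\<And>k. \<gamma> k + p * \<gamma> (k+2) = (1 + p - B * Q^(k+1)) * \<gamma> (k+1) - E * Q^(k+1) * \<alpha> (k+1)"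
    and lim: "(\<lambda>N. p^N * (\<alpha> (N+1) * \<gamma> N - \<alpha> N * \<gamma> (N+1))) \<longlonglongrightarrow> 0"
  shows "(\<lambda>k. p^k * Q^(k+1) * ((B - A) * \<alpha> (k+1) * \<gamma> (k+1) + E * \<alpha> (k+1)^2))
           sums (- (\<alpha> 1 * \<gamma> 0 - \<alpha> 0 * \<gamma> 1))"
proof -
  define V where "V N = p^N * (\<alpha> (N+1) * \<gamma> N - \<alpha> N * \<gamma> (N+1))" for N
  have step: "V (Suc k) - V k = p^k * Q^(k+1) * ((B - A) * \<alpha> (k+1) * \<gamma> (k+1) + E * \<alpha> (k+1)^2)" for k
  proof -
    have a: "\<alpha> k = (1 + p - A * Q^(k+1)) * \<alpha> (k+1) - p * \<alpha> (k+2)" using rA[of k] by (simp add: algebra_simps)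
    have g: "\<gamma> k = (1 + p - B * Q^(k+1)) * \<gamma> (k+1) - E * Q^(k+1) * \<alpha> (k+1) - p * \<gamma> (k+2)"
      using rB[of k] by (simp add: algebra_simps)
    have "V (Suc k) - V k = p^k * (p * (\<alpha> (k+2) * \<gamma> (k+1) - \<alpha> (k+1) * \<gamma> (k+2))
          - \<alpha> (k+1) * \<gamma> k + \<alpha> k * \<gamma> (k+1))"
      unfolding V_def by (simp add: algebra_simps numeral_2_eq_2)
    also have "\<dots> = p^k * Q^(k+1) * ((B - A) * \<alpha> (k+1) * \<gamma> (k+1) + E * \<alpha> (k+1)^2)"
      by (simp only: a g) (simp add: algebra_simps power2_eq_square)
    finally show ?thesis .
  qed
  have "(\<lambda>N. \<Sum>k<N. p^k * Q^(k+1) * ((B - A) * \<alpha> (k+1) * \<gamma> (k+1) + E * \<alpha> (k+1)^2))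
         = (\<lambda>N. V N - V 0)"
    by (rule ext) (simp only: step[symmetric] sum_lessThan_telescope)
  moreover have "(\<lambda>N. V N - V 0) \<longlonglongrightarrow> 0 - V 0"
    using lim unfolding V_def[abs_def] by (intro tendsto_diff) auto
  ultimately show ?thesis unfolding sums_def by (simp add: V_def)
qed

lemma GGseq_lim:
  assumes q: "0 < q" "q < 1" and nu: "\<nu> > -1"
  shows "(\<lambda>N. GG q \<nu> (c * complex_of_real (q^2)^N)) \<longlonglongrightarrow> GG q \<nu> 0"
    and "(\<lambda>N. GD q \<nu> (c * complex_of_real (q^2)^N)) \<longlonglongrightarrow> GD q \<nu> 0"
proof -
  have "norm (complex_of_real (q^2)) < 1"
  proof -
    have "q^2 < 1" using q by (simp add: power_less_one_iff)
    thus ?thesis by (subst norm_of_real) simp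
  qed
  hence "(\<lambda>N. c * complex_of_real (q^2)^N) \<longlonglongrightarrow> c * 0"
    by (intro tendsto_mult tendsto_const LIMSEQ_power_zero)
  hence t: "(\<lambda>N. c * complex_of_real (q^2)^N) \<longlonglongrightarrow> 0" by simp
  show "(\<lambda>N. GG q \<nu> (c * complex_of_real (q^2)^N)) \<longlonglongrightarrow> GG q \<nu> 0"
    by (rule isCont_tendsto_compose[OF GG_cont[OF assms] t])
  show "(\<lambda>N. GD q \<nu> (c * complex_of_real (q^2)^N)) \<longlonglongrightarrow> GD q \<nu> 0"
    by (rule isCont_tendsto_compose[OF GD_cont[OF assms] t])
qed

lemma pQ_lim:
  assumes q: "0 < q" "q < 1" and nu: "\<nu> > -1"
  shows "(\<lambda>N. (complex_of_real (q powr \<nu>)^2 * complex_of_real (q^2))^N) \<longlonglongrightarrow> 0"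
proof -
  have p2: "q powr (2::real) = q^2" using powr_realpow[OF q(1), of 2] by simp
  have pn: "(q powr \<nu>)^2 = q powr (2*\<nu>)" using q by (simp add: powr_power)
  have e: "(q powr \<nu>)^2 * q^2 = q powr (2*\<nu>+2)"
    unfolding pn p2[symmetric] by (simp add: powr_add)
  have "complex_of_real (q powr \<nu>)^2 * complex_of_real (q^2) = of_real (q powr (2*\<nu>+2))"
    by (simp only: e[symmetric] of_real_mult of_real_power)
  moreover have "norm (complex_of_real (q powr (2*\<nu>+2))) < 1"
    using powr_lt1[OF q, of "2*\<nu>+2"] nu by simp
  ultimately show ?thesis by (simp only:) (rule LIMSEQ_power_zero)
qed



lemma ortho_sum:
  assumes q: "0 < q" "q < 1" and nu: "\<nu> > -1"
    and za: "GG q \<nu> (of_real a) = 0" and zb: "GG q \<nu> (of_real b) = 0" and ab: "a \<noteq> b"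
  defines "Q \<equiv> complex_of_real (q^2)" and "p \<equiv> complex_of_real (q powr \<nu>)^2"
  shows "(\<lambda>k. p^k * Q^(k+1) * (GG q \<nu> (of_real a * Q^(k+1)) * GG q \<nu> (of_real b * Q^(k+1)))) sums 0"
proof -
  let ?G = "GG q \<nu>" and ?T = "GG q (\<nu>+1)"
  have E: "\<And>z. ?G z + p * ?G (Q^2*z) = (1+p-Q*z) * ?G (Q*z)"
    unfolding Q_def p_def by (rule GG_E[OF q nu])
  have Bq: "\<And>y. ?G (Q * y) = ?G y + Q * y * ?T (Q * y)"
    using GG_B[OF q nu] unfolding Q_def by (simp add: algebra_simps)
  define \<alpha> where "\<alpha> k = ?G (of_real a * Q^k)" for k
  define \<gamma> where "\<gamma> k = ?G (of_real b * Q^k)" for k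
  have rec: "?G (c * Q^k) + p * ?G (c * Q^(k+2)) = (1 + p - c * Q^(k+1)) * ?G (c * Q^(k+1))" for c k
    using E[of "c * Q^k"] by (simp add: algebra_simps power_add power2_eq_square)
  have rA: "\<alpha> k + p * \<alpha> (k+2) = (1 + p - of_real a * Q^(k+1)) * \<alpha> (k+1)" for k
    unfolding \<alpha>_def by (rule rec)
  have rB: "\<gamma> k + p * \<gamma> (k+2) = (1 + p - of_real b * Q^(k+1)) * \<gamma> (k+1) - 0 * Q^(k+1) * \<alpha> (k+1)" for k
    unfolding \<gamma>_def using rec by simp
  have sh: "?G (c * Q^(N+1)) = ?G (c * Q^N) + c * Q^(N+1) * ?T (c * Q * Q^N)" for c N
    using Bq[of "c * Q^N"] by (simp add: algebra_simps)
  have V: "p^N * (\<alpha> (N+1) * \<gamma> N - \<alpha> N * \<gamma> (N+1)) =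
      (p*Q)^N * Q * (of_real a * ?T (of_real a * Q * Q^N) * ?G (of_real b * Q^N)
          - ?G (of_real a * Q^N) * of_real b * ?T (of_real b * Q * Q^N))" for N
    unfolding \<alpha>_def \<gamma>_def sh by (simp add: algebra_simps power_mult_distrib)
  have lim: "(\<lambda>N. p^N * (\<alpha> (N+1) * \<gamma> N - \<alpha> N * \<gamma> (N+1))) \<longlonglongrightarrow> 0"
  proof -
    have "(\<lambda>N. (p*Q)^N * Q * (of_real a * ?T (of_real a * Q * Q^N) * ?G (of_real b * Q^N)
          - ?G (of_real a * Q^N) * of_real b * ?T (of_real b * Q * Q^N))) \<longlonglongrightarrow>
          0 * Q * (of_real a * ?T 0 * ?G 0 - ?G 0 * of_real b * ?T 0)"
      unfolding Q_def p_def using nu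
      by (intro tendsto_intros pQ_lim[OF q nu] GGseq_lim[OF q]) auto
    thus ?thesis unfolding V by simp
  qed
  have "(\<lambda>k. p^k * Q^(k+1) * ((of_real b - of_real a) * \<alpha> (k+1) * \<gamma> (k+1) + 0 * \<alpha> (k+1)^2))
           sums (- (\<alpha> 1 * \<gamma> 0 - \<alpha> 0 * \<gamma> 1))"
    by (rule tele[OF rA rB lim])
  moreover have "\<alpha> 0 = 0" "\<gamma> 0 = 0" using za zb by (auto simp: \<alpha>_def \<gamma>_def)
  ultimately have s: "(\<lambda>k. (of_real b - of_real a) * (p^k * Q^(k+1) * (\<alpha> (k+1) * \<gamma> (k+1)))) sums 0"
    by (simp add: algebra_simps)
  have nz: "complex_of_real b - of_real a \<noteq> 0" using ab by simp
  have inv: "\<And>x. inverse (complex_of_real b - of_real a) * ((complex_of_real b - of_real a) * x) = x"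
    using nz by (simp add: mult.assoc[symmetric])
  from sums_mult[OF s, of "inverse (complex_of_real b - of_real a)"]
  have "(\<lambda>k. p^k * Q^(k+1) * (\<alpha> (k+1) * \<gamma> (k+1))) sums 0" by (simp only: inv) simp
  thus ?thesis by (simp only: \<alpha>_def \<gamma>_def)
qed

lemma norm_sum:
  assumes q: "0 < q" "q < 1" and nu: "\<nu> > -1"
    and za: "GG q \<nu> (of_real a) = 0"
  defines "Q \<equiv> complex_of_real (q^2)" and "p \<equiv> complex_of_real (q powr \<nu>)^2"
  shows "(\<lambda>k. p^k * Q^(k+1) * (GG q \<nu> (of_real a * Q^(k+1)))^2) sums
           (- GG q \<nu> (of_real a * Q) * GD q \<nu> (of_real a))"
proof -
  let ?G = "GG q \<nu>" and ?D = "GD q \<nu>"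
  have E: "\<And>z. ?G z + p * ?G (Q^2*z) = (1+p-Q*z) * ?G (Q*z)"
    unfolding Q_def p_def by (rule GG_E[OF q nu])
  have Ed: "\<And>z. ?D z + p * Q^2 * ?D (Q^2 * z) = - Q * ?G (Q * z) + (1 + p - Q * z) * Q * ?D (Q * z)"
    unfolding Q_def p_def by (rule GG_Ed[OF q nu])
  define \<alpha> where "\<alpha> k = ?G (of_real a * Q^k)" for k
  define \<beta> where "\<beta> k = Q^k * ?D (of_real a * Q^k)" for k
  have rA: "\<alpha> k + p * \<alpha> (k+2) = (1 + p - of_real a * Q^(k+1)) * \<alpha> (k+1)" for k
    unfolding \<alpha>_def using E[of "of_real a * Q^k"] by (simp add: algebra_simps power_add power2_eq_square)
  have rB: "\<beta> k + p * \<beta> (k+2) = (1 + p - of_real a * Q^(k+1)) * \<beta> (k+1) - 1 * Q^(k+1) * \<alpha> (k+1)" for k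
  proof -
    have "Q^k * (?D (of_real a * Q^k) + p * Q^2 * ?D (Q^2 * (of_real a * Q^k))) =
          Q^k * (- Q * ?G (Q * (of_real a * Q^k)) + (1 + p - Q * (of_real a * Q^k)) * Q * ?D (Q * (of_real a * Q^k)))"
      by (simp only: Ed)
    thus ?thesis unfolding \<alpha>_def \<beta>_def by (simp add: algebra_simps power_add power2_eq_square)
  qed
  have V: "p^N * (\<alpha> (N+1) * \<beta> N - \<alpha> N * \<beta> (N+1)) =
      (p*Q)^N * (?G (of_real a * Q * Q^N) * ?D (of_real a * Q^N)
          - ?G (of_real a * Q^N) * Q * ?D (of_real a * Q * Q^N))" for N
    unfolding \<alpha>_def \<beta>_def by (simp add: algebra_simps power_mult_distrib)
  have lim: "(\<lambda>N. p^N * (\<alpha> (N+1) * \<beta> N - \<alpha> N * \<beta> (N+1))) \<longlonglongrightarrow> 0"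
  proof -
    have "(\<lambda>N. (p*Q)^N * (?G (of_real a * Q * Q^N) * ?D (of_real a * Q^N)
          - ?G (of_real a * Q^N) * Q * ?D (of_real a * Q * Q^N))) \<longlonglongrightarrow>
          0 * (?G 0 * ?D 0 - ?G 0 * Q * ?D 0)"
      unfolding Q_def p_def
      by (intro tendsto_intros pQ_lim[OF q nu] GGseq_lim[OF q nu])
    thus ?thesis unfolding V by simp
  qed
  have "(\<lambda>k. p^k * Q^(k+1) * ((of_real a - of_real a) * \<alpha> (k+1) * \<beta> (k+1) + 1 * \<alpha> (k+1)^2))
           sums (- (\<alpha> 1 * \<beta> 0 - \<alpha> 0 * \<beta> 1))"
    by (rule tele[OF rA rB lim])
  moreover have "\<alpha> 0 = 0" using za by (auto simp: \<alpha>_def)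
  ultimately show ?thesis by (simp add: \<alpha>_def \<beta>_def)
qed



definition Cq :: "real \<Rightarrow> complex" where
  "Cq q = qpoch_inf (of_real (q^2)) (of_real (q^2))"

lemma Cq_nz: "0 < q \<Longrightarrow> q < 1 \<Longrightarrow> Cq q \<noteq> 0"
  unfolding Cq_def
proof (rule qpoch_inf_nz)
  assume q: "0 < q" "q < 1"
  have "q^2 < 1" using q by (simp add: power_less_one_iff)
  thus "norm (complex_of_real (q^2)) < 1" by (subst norm_of_real) simp
qed (auto simp: power_less_one_iff)

lemma hej_fun: "hej q \<nu> = (\<lambda>z. z powr (complex_of_real \<nu>) / Cq q * GG q \<nu> (z^2))"
  unfolding hej_def GG_def tc_def Cq_def fun_eq_iff
  by (simp add: power_mult mult.assoc)

lemma hej_real: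
  assumes "x > 0"
  shows "hej q \<nu> (complex_of_real x) = of_real (x powr \<nu>) / Cq q * GG q \<nu> (of_real (x^2))"
  unfolding hej_fun using assms by (simp add: powr_of_real)

lemma hej_deriv:
  assumes q: "0 < q" "q < 1" and nu: "\<nu> > -1" and x: "x > 0"
    and z: "GG q \<nu> (of_real (x^2)) = 0"
  shows "deriv (hej q \<nu>) (of_real x) = of_real (x powr \<nu>) / Cq q * GD q \<nu> (of_real (x^2)) * 2 * of_real x"
proof -
  have nr: "complex_of_real x \<notin> \<real>\<^sub>\<le>\<^sub>0" using x by (auto simp: nonpos_Reals_def)
  have d1: "((\<lambda>z. z powr (complex_of_real \<nu>)) has_field_derivative
      (of_real \<nu> * of_real x powr (of_real \<nu> - 1))) (at (of_real x))"
    by (rule has_field_derivative_powr[OF nr])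
  have d2: "((\<lambda>z. GG q \<nu> (z^2)) has_field_derivative (GD q \<nu> ((of_real x)^2) * (2 * of_real x))) (at (of_real x))"
    by (rule DERIV_chain2[OF GG_deriv[OF q nu]]) (auto intro!: derivative_eq_intros)
  have "deriv (hej q \<nu>) (of_real x) = (of_real x powr of_real \<nu> / Cq q) * (GD q \<nu> ((of_real x)^2) * (2 * of_real x))
      + (of_real \<nu> * of_real x powr (of_real \<nu> - 1)) / Cq q * GG q \<nu> ((of_real x)^2)"
    unfolding hej_fun by (rule DERIV_imp_deriv[OF DERIV_mult'[OF DERIV_cdivide[OF d1] d2]])
  also have "\<dots> = of_real (x powr \<nu>) / Cq q * GD q \<nu> (of_real (x^2)) * 2 * of_real x"
    using z x by (simp add: powr_of_real)
  finally show ?thesis .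
qed



lemma hej_pt:
  assumes q: "0 < q" and x: "x > 0"
  shows "hej q \<nu> (of_real (q*x) * (1 * of_real q ^ k)) =
     of_real (x powr \<nu>) * of_real (q powr \<nu>)^(k+1) / Cq q * GG q \<nu> (of_real (x^2) * of_real (q^2)^(k+1))"
proof -
  have e: "of_real (q*x) * (1 * complex_of_real q ^ k) = of_real (x * q^(k+1))" by simp
  have p: "(x * q^(k+1)) powr \<nu> = x powr \<nu> * (q powr \<nu>)^(k+1)"
    using q x by (simp add: powr_mult powr_power powr_realpow[symmetric] powr_powr mult.commute
        del: of_nat_Suc)
  have s: "complex_of_real ((x * q^(k+1))^2) = of_real (x^2) * of_real (q^2)^(k+1)"
    by (simp add: power_mult_distrib power_mult[symmetric] mult.commute)
  show ?thesis unfolding e hej_real[OF mult_pos_pos[OF x zero_less_power[OF q]]] p s by simp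
qed



theorem proposition3p5:
  fixes q \<nu> :: real and j :: "nat \<Rightarrow> real"
  assumes q: "0 < q" "q < 1"
    and nu: "\<nu> > -1"
    and jpos: "j 1 > 0"
    and jmono: "strict_mono_on {1..} j"
    and jzeros: "{x::real. x > 0 \<and> hej q \<nu> (of_real x) = 0} = j ` {1..}"
  shows "\<forall>n\<ge>1. \<forall>m\<ge>1.
      qint q (\<lambda>x. x * hej q \<nu> (of_real (q * j n) * x) * hej q \<nu> (of_real (q * j m) * x)) 1
        = - (1/2) * (1 - of_real q) * of_real (q powr (\<nu> - 1))
            * hej q (\<nu> + 1) (of_real (q * j n)) * deriv (hej q \<nu>) (of_real (j n))
            * (if n = m then 1 else 0)
    \<and> - (1/2) * (1 - of_real q) * of_real (q powr (\<nu> - 1))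
            * hej q (\<nu> + 1) (of_real (q * j n)) * deriv (hej q \<nu>) (of_real (j n))
        = (1/2) * (1 - of_real q)^2 * of_real (q powr (\<nu> - 2))
            * qder q (hej q \<nu>) (of_real (j n)) * deriv (hej q \<nu>) (of_real (j n))
    \<and> (1/2) * (1 - of_real q)^2 * of_real (q powr (\<nu> - 2))
            * qder q (hej q \<nu>) (of_real (j n)) * deriv (hej q \<nu>) (of_real (j n))
        = - (1/2) * (1 - of_real q) * of_real (q powr (\<nu> - 2)) / of_real (j n)
            * hej q \<nu> (of_real (q * j n)) * deriv (hej q \<nu>) (of_real (j n))
    \<and> - (1/2) * (1 - of_real q) * of_real (q powr (\<nu> - 2)) / of_real (j n)
            * hej q \<nu> (of_real (q * j n)) * deriv (hej q \<nu>) (of_real (j n))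
        = - (1/2) * (1 - of_real q) * of_real (q powr (-2))
            * hej q (\<nu> + 1) (of_real (j n)) * deriv (hej q \<nu>) (of_real (j n))"
proof (intro allI impI)
  fix n m :: nat assume n: "n \<ge> 1" and m: "m \<ge> 1"
  define C where "C = Cq q"
  define Q where "Q = complex_of_real (q^2)"
  define p where "p = complex_of_real (q powr \<nu>)^2"
  define s where "s = q powr \<nu>"
  have C: "C \<noteq> 0" using Cq_nz[OF q] by (simp add: C_def)
  have spos: "s > 0" using q by (simp add: s_def)
  have zer: "j k > 0 \<and> hej q \<nu> (of_real (j k)) = 0" if "k \<ge> 1" for k
  proof -
    have "j k \<in> j ` {1..}" using that by auto
    thus ?thesis unfolding jzeros[symmetric] by auto
  qed
  have Gz: "GG q \<nu> (of_real ((j k)^2)) = 0" if "k \<ge> 1" for k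
  proof -
    have "of_real (j k powr \<nu>) / Cq q * GG q \<nu> (of_real ((j k)^2)) = 0"
      using zer[OF that] hej_real[of "j k" q \<nu>] by simp
    moreover have "complex_of_real (j k powr \<nu>) \<noteq> 0" using zer[OF that] by simp
    ultimately show ?thesis using Cq_nz[OF q] by simp
  qed
  define a where "a = j n"
  have a: "a > 0" "hej q \<nu> (of_real a) = 0" using zer[OF n] by (auto simp: a_def)
  have Ga: "GG q \<nu> (of_real (a^2)) = 0" using Gz[OF n] by (simp add: a_def)
  define t where "t = a powr \<nu>"
  have tpos: "t > 0" using a by (simp add: t_def)
  define \<alpha>1 where "\<alpha>1 = GG q \<nu> (of_real (a^2) * Q)"
  define Dv where "Dv = GD q \<nu> (of_real (a^2))"
  have Fder: "deriv (hej q \<nu>) (of_real (j n)) = of_real t / C * Dv * 2 * of_real a"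
    using hej_deriv[OF q nu a(1) Ga] by (simp add: a_def t_def C_def Dv_def)
  have sqa: "complex_of_real ((q*a)^2) = of_real (a^2) * Q"
    by (simp add: Q_def power_mult_distrib)
  have TB: "GG q (\<nu>+1) (of_real (a^2) * Q) * (Q * of_real (a^2)) = \<alpha>1"
    using GG_B[OF q nu, of "of_real (a^2)"] Ga by (simp add: \<alpha>1_def Q_def algebra_simps)
  have TA: "GG q (\<nu>+1) (of_real (a^2)) = of_real (q powr (2*\<nu>+2)) * GG q (\<nu>+1) (of_real (a^2) * Q)"
    using GG_A[OF q nu, of "of_real (a^2)"] Ga by (simp add: Q_def algebra_simps)
  have pw1: "(q*a) powr (\<nu>+1) = s * q * t * a" using q a
    by (simp add: powr_mult powr_add s_def t_def)
  have pw2: "(q*a) powr \<nu> = s * t" using q a by (simp add: powr_mult s_def t_def)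
  have pw3: "a powr (\<nu>+1) = t * a" using a by (simp add: powr_add t_def)
  have pw4: "q powr (\<nu>-1) = s / q" using q by (simp add: powr_diff s_def)
  have p2: "q powr (2::real) = q^2" using powr_realpow[OF q(1), of 2] by simp
  have pw5: "q powr (\<nu>-2) = s / q^2" using q by (simp add: powr_diff s_def p2)
  have pw6: "q powr (-2) = 1 / q^2" using q by (simp add: powr_minus p2 divide_inverse)
  have pw7: "q powr (2*\<nu>+2) = s^2 * q^2"
  proof -
    have pn: "(q powr \<nu>)^2 = q powr (2*\<nu>)" using q by (simp add: powr_power)
    show ?thesis unfolding s_def pn p2[symmetric] by (simp add: powr_add)
  qed
  have H1: "hej q (\<nu>+1) (of_real (q * j n)) = of_real (s*q*t*a) / C * (\<alpha>1 / (Q * of_real (a^2)))"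
  proof -
    have nz: "Q * of_real (a^2) \<noteq> 0" using q a by (simp add: Q_def)
    have "GG q (\<nu>+1) (of_real (a^2) * Q) = \<alpha>1 / (Q * of_real (a^2))"
      using TB nz by (simp add: field_simps)
    thus ?thesis using hej_real[of "q*a" q "\<nu>+1"] q a unfolding sqa pw1
      by (simp add: a_def C_def)
  qed
  have H0: "hej q \<nu> (of_real (q * j n)) = of_real (s*t) / C * \<alpha>1"
    using hej_real[of "q*a" q \<nu>] q a unfolding sqa pw2 by (simp add: a_def C_def \<alpha>1_def)
  have H2: "hej q (\<nu>+1) (of_real (j n)) = of_real (t*a) / C * (of_real (s^2*q^2) * (\<alpha>1 / (Q * of_real (a^2))))"
  proof -
    have nz: "Q * of_real (a^2) \<noteq> 0" using q a by (simp add: Q_def)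
    have "GG q (\<nu>+1) (of_real (a^2) * Q) = \<alpha>1 / (Q * of_real (a^2))"
      using TB nz by (simp add: field_simps)
    thus ?thesis using hej_real[of "a" q "\<nu>+1"] a TA unfolding pw3 pw7
      by (simp add: a_def C_def)
  qed
  have QD: "qder q (hej q \<nu>) (of_real (j n)) = - hej q \<nu> (of_real (q * j n)) / ((1 - of_real q) * of_real a)"
    unfolding qder_def using a by (simp add: a_def)
  have qne: "1 - complex_of_real q \<noteq> 0" using q by simp
  have ane: "complex_of_real a \<noteq> 0" using a by simp
  have qz: "complex_of_real q \<noteq> 0" using q by simp
  have Qe: "Q = of_real q * of_real q" by (simp add: Q_def power2_eq_square)
  have eq2: "- (1/2) * (1 - of_real q) * of_real (q powr (\<nu> - 1))
            * hej q (\<nu> + 1) (of_real (q * j n)) * deriv (hej q \<nu>) (of_real (j n))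
        = (1/2) * (1 - of_real q)^2 * of_real (q powr (\<nu> - 2))
            * qder q (hej q \<nu>) (of_real (j n)) * deriv (hej q \<nu>) (of_real (j n))"
    unfolding QD H0 H1 pw4 pw5 Qe using qne ane qz C by (simp add: field_simps power2_eq_square)
  have eq3: "(1/2) * (1 - of_real q)^2 * of_real (q powr (\<nu> - 2))
            * qder q (hej q \<nu>) (of_real (j n)) * deriv (hej q \<nu>) (of_real (j n))
        = - (1/2) * (1 - of_real q) * of_real (q powr (\<nu> - 2)) / of_real (j n)
            * hej q \<nu> (of_real (q * j n)) * deriv (hej q \<nu>) (of_real (j n))"
    unfolding QD using qne ane by (simp add: a_def field_simps power2_eq_square)
  have eq4: "- (1/2) * (1 - of_real q) * of_real (q powr (\<nu> - 2)) / of_real (j n)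
            * hej q \<nu> (of_real (q * j n)) * deriv (hej q \<nu>) (of_real (j n))
        = - (1/2) * (1 - of_real q) * of_real (q powr (-2))
            * hej q (\<nu> + 1) (of_real (j n)) * deriv (hej q \<nu>) (of_real (j n))"
    unfolding H0 H2 pw5 pw6 Qe using qne ane qz C by (simp add: a_def[symmetric] field_simps power2_eq_square)
  define b where "b = j m"
  have b: "b > 0" using zer[OF m] by (simp add: b_def)
  have Gb: "GG q \<nu> (of_real (b^2)) = 0" using Gz[OF m] by (simp add: b_def)
  define tb where "tb = b powr \<nu>"
  define K where "K = of_real t * of_real tb * p / (C * C * Q)"
  define X where "X k = p^k * Q^(k+1) * (GG q \<nu> (of_real (a^2) * Q^(k+1)) * GG q \<nu> (of_real (b^2) * Q^(k+1)))" for k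
  have sq: "x^(k+1) * x^(k+1) = x^2 * (x^2)^k" for x :: complex and k
  proof -
    have "x^(k+1) * x^(k+1) = x^((k+1)+(k+1))" by (simp only: power_add)
    also have "(k+1)+(k+1) = 2 + 2*k" by simp
    also have "x^(2+2*k) = x^2 * (x^2)^k" by (simp only: power_add power_mult)
    finally show ?thesis .
  qed
  have qq: "complex_of_real q ^ k * complex_of_real q ^ k = Q^(k+1) / Q" for k
  proof -
    have Qnz: "Q \<noteq> 0" using q by (simp add: Q_def)
    have "complex_of_real q ^ k * complex_of_real q ^ k = (complex_of_real q * complex_of_real q)^k"
      by (simp only: power_mult_distrib)
    also have "\<dots> = Q^k" by (simp add: Q_def power2_eq_square)
    also have "\<dots> = Q^(k+1) / Q" using Qnz by simp
    finally show ?thesis .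
  qed
  have trm: "(\<lambda>x. x * hej q \<nu> (of_real (q * j n) * x) * hej q \<nu> (of_real (q * j m) * x)) (1 * of_real q ^ k)
      * of_real q ^ k = K * X k" for k
  proof -
    have "(\<lambda>x. x * hej q \<nu> (of_real (q * j n) * x) * hej q \<nu> (of_real (q * j m) * x)) (1 * of_real q ^ k)
      * of_real q ^ k = (complex_of_real q ^ k * complex_of_real q ^ k) *
        (of_real s ^(k+1) * of_real s^(k+1)) * (of_real t * of_real tb / (C * C)) *
        (GG q \<nu> (of_real (a^2) * Q^(k+1)) * GG q \<nu> (of_real (b^2) * Q^(k+1)))"
      unfolding hej_pt[OF q(1) a(1)[unfolded a_def]] hej_pt[OF q(1) b[unfolded b_def]]
      by (simp add: a_def[symmetric] b_def[symmetric] s_def t_def tb_def C_def Q_def mult_ac)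
    also have "\<dots> = K * X k"
    proof -
      have Qnz: "Q \<noteq> 0" using q by (simp add: Q_def)
      show ?thesis unfolding qq sq K_def X_def p_def using C Qnz by (simp add: s_def field_simps)
    qed
    finally show ?thesis .
  qed
  have qint_eq: "qint q (\<lambda>x. x * hej q \<nu> (of_real (q * j n) * x) * hej q \<nu> (of_real (q * j m) * x)) 1
      = (1 - of_real q) * (K * S)" if XS: "X sums S" for S
  proof -
    have "(\<lambda>k. K * X k) sums (K * S)" by (rule sums_mult[OF XS])
    hence "(\<lambda>k. (\<lambda>x. x * hej q \<nu> (of_real (q * j n) * x) * hej q \<nu> (of_real (q * j m) * x)) (1 * of_real q ^ k)
      * of_real q ^ k) sums (K * S)" by (simp only: trm)
    hence "(\<Sum>k. (\<lambda>x. x * hej q \<nu> (of_real (q * j n) * x) * hej q \<nu> (of_real (q * j m) * x)) (1 * of_real q ^ k)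
      * of_real q ^ k) = K * S" by (rule sums_unique[symmetric])
    thus ?thesis unfolding qint_def by simp
  qed
  have INT: "qint q (\<lambda>x. x * hej q \<nu> (of_real (q * j n) * x) * hej q \<nu> (of_real (q * j m) * x)) 1
        = - (1/2) * (1 - of_real q) * of_real (q powr (\<nu> - 1))
            * hej q (\<nu> + 1) (of_real (q * j n)) * deriv (hej q \<nu>) (of_real (j n))
            * (if n = m then 1 else 0)"
  proof (cases "n = m")
    case True
    have "(\<lambda>k. p^k * Q^(k+1) * (GG q \<nu> (of_real (a^2) * Q^(k+1)))^2) sums (- \<alpha>1 * Dv)"
      using norm_sum[OF q nu Ga] by (simp add: p_def Q_def \<alpha>1_def Dv_def)
    moreover have "X = (\<lambda>k. p^k * Q^(k+1) * (GG q \<nu> (of_real (a^2) * Q^(k+1)))^2)"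
      using True by (simp add: X_def fun_eq_iff a_def b_def power2_eq_square)
    ultimately have XS: "X sums (- \<alpha>1 * Dv)" by simp
    have tbt: "tb = t" using True by (simp add: tb_def t_def a_def b_def)
    have R: "(1 - of_real q) * (K * (- \<alpha>1 * Dv)) = - (1/2) * (1 - of_real q) * of_real (q powr (\<nu> - 1))
            * hej q (\<nu> + 1) (of_real (q * j n)) * deriv (hej q \<nu>) (of_real (j n))"
      unfolding Fder H1 pw4 tbt K_def p_def Qe using qne ane qz C
      by (simp add: s_def[symmetric] field_simps power2_eq_square)
    show ?thesis using qint_eq[OF XS] R True by simp
  next
    case False
    have "j n \<noteq> j m"
    proof
      assume h: "j n = j m"
      from False have "n < m \<or> m < n" by arith
      thus False using strict_mono_onD[OF jmono, of n m] strict_mono_onD[OF jmono, of m n] n m h by auto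
    qed
    hence ab: "a^2 \<noteq> b^2" using a b by (simp add: a_def b_def power2_eq_iff_nonneg)
    have "X sums 0" unfolding X_def using ortho_sum[OF q nu Ga Gb ab] by (simp add: p_def Q_def)
    thus ?thesis using qint_eq False by simp
  qed
  show "qint q (\<lambda>x. x * hej q \<nu> (of_real (q * j n) * x) * hej q \<nu> (of_real (q * j m) * x)) 1
        = - (1/2) * (1 - of_real q) * of_real (q powr (\<nu> - 1))
            * hej q (\<nu> + 1) (of_real (q * j n)) * deriv (hej q \<nu>) (of_real (j n))
            * (if n = m then 1 else 0)
    \<and> - (1/2) * (1 - of_real q) * of_real (q powr (\<nu> - 1))
            * hej q (\<nu> + 1) (of_real (q * j n)) * deriv (hej q \<nu>) (of_real (j n))
        = (1/2) * (1 - of_real q)^2 * of_real (q powr (\<nu> - 2))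
            * qder q (hej q \<nu>) (of_real (j n)) * deriv (hej q \<nu>) (of_real (j n))
    \<and> (1/2) * (1 - of_real q)^2 * of_real (q powr (\<nu> - 2))
            * qder q (hej q \<nu>) (of_real (j n)) * deriv (hej q \<nu>) (of_real (j n))
        = - (1/2) * (1 - of_real q) * of_real (q powr (\<nu> - 2)) / of_real (j n)
            * hej q \<nu> (of_real (q * j n)) * deriv (hej q \<nu>) (of_real (j n))
    \<and> - (1/2) * (1 - of_real q) * of_real (q powr (\<nu> - 2)) / of_real (j n)
            * hej q \<nu> (of_real (q * j n)) * deriv (hej q \<nu>) (of_real (j n))
        = - (1/2) * (1 - of_real q) * of_real (q powr (-2))
            * hej q (\<nu> + 1) (of_real (j n)) * deriv (hej q \<nu>) (of_real (j n))"
    using INT eq2 eq3 eq4 by blast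
qed

end
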